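(* Let $D\subset\mathbb{R}^2$ be an open set and let $\phi:D\to\mathbb{R}$ be a continuously differentiable function. Consider the system of Keyfitz–Kranzer type \[ u_t+(u\,\phi(u,v))_x=0,\qquad v_t+(v\,\phi(u,v))_x=0, \] with flux $F(u,v)=(u\phi(u,v),\,v\phi(u,v))$. Let $\eta:D\to\mathbb{R}$ be a $C^1$ function which is Lipschitz in a neighborhood of the origin, and let $q(u,v)=\psi(u,v)+\eta(u,v)\phi(u,v)$, where $\psi:D\to\mathbb{R}$ is a $C^1$ function satisfying \[ \nabla\psi(u,v)=\big((u,v)\cdot\nabla\eta(u,v)-\eta(u,v)\big)\,\nabla\phi(u,v)\quad\text{on } D. \] Then $(\eta,q)$ is an entropy–entropy flux pair for this system, i.e. $\nabla\eta(u,v)\,DF(u,v)=\nabla q(u,v)$ on $D$, where $DF$ is the Jacobian matrix of $F$. Moreover, if $\eta$ is convex, then $(\eta,q)$ is a convex entropy–entropy flux pair.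
   Context: For a system $U_t+F(U)_x=0$ with $U=(u,v)$, a pair of functions $\eta,q$ is called an entropy–entropy flux pair if $\nabla\eta(U)\,DF(U)=\nabla q(U)$ (gradients written as row vectors); it is called a convex entropy–entropy flux pair if in addition $\eta$ is convex. *)

theory Defs
  imports "HOL-Analysis.Analysis"
begin

text \<open>Points of the plane are pairs (u,v) :: real \<times> real.  The Frechet derivative
  frechet_derivative f (at p) is the linear map h \<mapsto> \<nabla>f(p) h (row vector / Jacobian).\<close>

definition C1_on :: "(real \<times> real) set \<Rightarrow> (real \<times> real \<Rightarrow> 'b::real_normed_vector) \<Rightarrow> bool" where
  "C1_on D f \<longleftrightarrow> (\<forall>p\<in>D. f differentiable (at p)) \<and>
     continuous_on D (\<lambda>p. frechet_derivative f (at p) (1, 0)) \<and>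
     continuous_on D (\<lambda>p. frechet_derivative f (at p) (0, 1))"

text \<open>Entropy--entropy flux pair for U_t + F(U)_x = 0 on D:
  \<nabla>\<eta>(U) DF(U) = \<nabla>q(U), i.e. for every direction h,
  D\<eta>(U)(DF(U) h) = Dq(U) h.\<close>
definition entropy_pair ::
  "(real \<times> real) set \<Rightarrow> (real \<times> real \<Rightarrow> real \<times> real) \<Rightarrow> (real \<times> real \<Rightarrow> real) \<Rightarrow> (real \<times> real \<Rightarrow> real) \<Rightarrow> bool" where
  "entropy_pair D F \<eta> q \<longleftrightarrow>
     (\<forall>p\<in>D. F differentiable (at p) \<and> \<eta> differentiable (at p) \<and> q differentiable (at p) \<and>
       (\<forall>h. frechet_derivative \<eta> (at p) (frechet_derivative F (at p) h) = frechet_derivative q (at p) h))"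

definition convex_entropy_pair ::
  "(real \<times> real) set \<Rightarrow> (real \<times> real \<Rightarrow> real \<times> real) \<Rightarrow> (real \<times> real \<Rightarrow> real) \<Rightarrow> (real \<times> real \<Rightarrow> real) \<Rightarrow> bool" where
  "convex_entropy_pair D F \<eta> q \<longleftrightarrow> entropy_pair D F \<eta> q \<and> convex_on D \<eta>"

end

theory Submission
  imports Defs
begin

theorem lemma2:
  fixes D :: "(real \<times> real) set"
    and \<phi> \<eta> \<psi> q :: "real \<times> real \<Rightarrow> real"
    and F :: "real \<times> real \<Rightarrow> real \<times> real"
  assumes D_open: "open D"
    and phi_C1: "C1_on D \<phi>"
    and eta_C1: "C1_on D \<eta>"
    and eta_lip: "\<exists>U L. open U \<and> (0, 0) \<in> U \<and> L-lipschitz_on (U \<inter> D) \<eta>"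
    and psi_C1: "C1_on D \<psi>"
    and psi_grad: "\<forall>p\<in>D. \<forall>h. frechet_derivative \<psi> (at p) h =
                     (frechet_derivative \<eta> (at p) p - \<eta> p) * frechet_derivative \<phi> (at p) h"
    and F_def: "F = (\<lambda>(u, v). (u * \<phi> (u, v), v * \<phi> (u, v)))"
    and q_def: "q = (\<lambda>p. \<psi> p + \<eta> p * \<phi> p)"
  shows "entropy_pair D F \<eta> q \<and> (convex_on D \<eta> \<longrightarrow> convex_entropy_pair D F \<eta> q)"
proof -
  have F': "F = (\<lambda>x. (fst x * \<phi> x, snd x * \<phi> x))" unfolding F_def by auto
  have main: "entropy_pair D F \<eta> q"
    unfolding entropy_pair_def
  proof
    fix p assume pD: "p \<in> D"
    define Le where "Le = frechet_derivative \<eta> (at p)"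
    define Lf where "Lf = frechet_derivative \<phi> (at p)"
    define Ls where "Ls = frechet_derivative \<psi> (at p)"
    have de: "(\<eta> has_derivative Le) (at p)" unfolding Le_def
      using eta_C1 pD unfolding C1_on_def by (simp add: frechet_derivative_works)
    have df: "(\<phi> has_derivative Lf) (at p)" unfolding Lf_def
      using phi_C1 pD unfolding C1_on_def by (simp add: frechet_derivative_works)
    have ds: "(\<psi> has_derivative Ls) (at p)" unfolding Ls_def
      using psi_C1 pD unfolding C1_on_def by (simp add: frechet_derivative_works)
    have dF: "(F has_derivative (\<lambda>h. (fst p * Lf h + fst h * \<phi> p, snd p * Lf h + snd h * \<phi> p))) (at p)"
      unfolding F' by (rule derivative_eq_intros df | simp)+
    have dq: "(q has_derivative (\<lambda>h. Ls h + (\<eta> p * Lf h + Le h * \<phi> p))) (at p)"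
      unfolding q_def by (rule derivative_eq_intros df de ds | simp)+
    have linE: "linear Le" using de by (rule has_derivative_linear)
    have FD: "frechet_derivative F (at p) = (\<lambda>h. (fst p * Lf h + fst h * \<phi> p, snd p * Lf h + snd h * \<phi> p))"
      using dF by (rule frechet_derivative_at[symmetric])
    have qD: "frechet_derivative q (at p) = (\<lambda>h. Ls h + (\<eta> p * Lf h + Le h * \<phi> p))"
      using dq by (rule frechet_derivative_at[symmetric])
    have eq: "Le (fst p * Lf h + fst h * \<phi> p, snd p * Lf h + snd h * \<phi> p) = Ls h + (\<eta> p * Lf h + Le h * \<phi> p)" for h
    proof -
      have "(fst p * Lf h + fst h * \<phi> p, snd p * Lf h + snd h * \<phi> p) = Lf h *\<^sub>R p + \<phi> p *\<^sub>R h"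
        by (cases p, cases h) (simp add: algebra_simps)
      hence "Le (fst p * Lf h + fst h * \<phi> p, snd p * Lf h + snd h * \<phi> p) = Lf h * Le p + \<phi> p * Le h"
        using linE by (simp add: linear_add linear_scale)
      moreover have "Ls h = (Le p - \<eta> p) * Lf h" using psi_grad pD unfolding Ls_def Le_def Lf_def by blast
      ultimately show ?thesis by (simp add: algebra_simps)
    qed
    show "F differentiable at p \<and> \<eta> differentiable at p \<and> q differentiable at p \<and>
        (\<forall>h. frechet_derivative \<eta> (at p) (frechet_derivative F (at p) h) = frechet_derivative q (at p) h)"
      using dF de dq eq unfolding FD qD Le_def[symmetric] differentiable_def by blast
  qed
  thus ?thesis unfolding convex_entropy_pair_def by blast
qed

end
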